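(* Let $\|\cdot\|$ be a norm on $\mathbb{M}_n$. Then the class of all $M$-norms $\||\cdot\||$ on $\mathbb{M}_n$ with $\||A\||\le\|A\|$ for all $A\in\mathbb{M}_n$ has a maximum element.
   Context: $\mathbb{M}_n$ is the algebra of complex $n\times n$ matrices with identity $I$. A norm $\||\cdot\||$ on $\mathbb{M}_n$ is an $M$-norm if $\left\||\sum_{i=1}^k C_i^*X_iC_i\right\||\le \max_{1\le i\le k}\||X_i\||$ for all $k$, all $X_i\in\mathbb{M}_n$ and all $C_i\in\mathbb{M}_n$ with $\sum_{i=1}^k C_i^*C_i=I$. Inequalities between norms are pointwise. *)

theory Defs
  imports "HOL-Analysis.Analysis"
begin

definition adjoint_mat :: "complex^'n^'n \<Rightarrow> complex^'n^'n" where
  "adjoint_mat A = (\<chi> i j. cnj (A $ j $ i))"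

definition is_matrix_norm :: "(complex^'n^'n \<Rightarrow> real) \<Rightarrow> bool" where
  "is_matrix_norm N \<longleftrightarrow>
     (\<forall>A. 0 \<le> N A) \<and> (\<forall>A. N A = 0 \<longleftrightarrow> A = 0) \<and>
     (\<forall>c A. N (\<chi> i j. c * A $ i $ j) = cmod c * N A) \<and>
     (\<forall>A B. N (A + B) \<le> N A + N B)"

definition is_M_norm :: "(complex^'n^'n \<Rightarrow> real) \<Rightarrow> bool" where
  "is_M_norm N \<longleftrightarrow> is_matrix_norm N \<and>
     (\<forall>(k::nat) (X::nat \<Rightarrow> complex^'n^'n) (C::nat \<Rightarrow> complex^'n^'n).
        0 < k \<longrightarrow> (\<Sum>i<k. adjoint_mat (C i) ** C i) = mat 1 \<longrightarrow>
        N (\<Sum>i<k. adjoint_mat (C i) ** X i ** C i) \<le> Max ((\<lambda>i. N (X i)) ` {..<k}))"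

end

theory Submission imports Defs begin

definition ip :: "complex^'n \<Rightarrow> complex^'n \<Rightarrow> complex" where
  "ip y w = (\<Sum>j\<in>UNIV. cnj (y$j) * w$j)"

definition qf :: "complex^'n^'n \<Rightarrow> complex^'n \<Rightarrow> complex" where
  "qf A x = ip x (A *v x)"

definition nrm2 :: "complex^'n \<Rightarrow> real" where
  "nrm2 x = (\<Sum>j\<in>UNIV. (cmod (x$j))^2)"

lemma ip_adj: "ip y (adjoint_mat C *v w) = ip (C *v y) w"
proof -
  have "ip y (adjoint_mat C *v w) = (\<Sum>j\<in>UNIV. \<Sum>l\<in>UNIV. cnj (y$j) * (cnj (C$l$j) * w$l))"
    unfolding ip_def adjoint_mat_def matrix_vector_mult_def by (simp add: sum_distrib_left)
  also have "\<dots> = (\<Sum>l\<in>UNIV. \<Sum>j\<in>UNIV. cnj (y$j) * (cnj (C$l$j) * w$l))"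
    by (rule sum.swap)
  also have "\<dots> = ip (C *v y) w"
    unfolding ip_def matrix_vector_mult_def by (simp add: sum_distrib_left sum_distrib_right mult_ac)
  finally show ?thesis .
qed

lemma qf_adj: "qf (adjoint_mat C ** X ** C) x = qf X (C *v x)"
  unfolding qf_def by (simp add: matrix_vector_mul_assoc[symmetric] ip_adj)

lemma ip_add: "ip y (u + v) = ip y u + ip y v"
  unfolding ip_def by (simp add: distrib_left sum.distrib)

lemma qf_sum: "qf (\<Sum>i<(k::nat). B i) x = (\<Sum>i<k. qf (B i) x)"
proof (induction k)
  case 0
  then show ?case by (simp add: qf_def ip_def matrix_vector_mult_def)
next
  case (Suc k)
  then show ?case by (simp add: qf_def ip_add matrix_vector_mult_add_rdistrib)
qed

lemma qf_id: "qf (mat 1) x = of_real (nrm2 x)"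
proof -
  have "x$j * cnj (x$j) = of_real ((cmod (x$j))^2)" for j using complex_norm_square[of "x$j"] by simp
  then show ?thesis unfolding qf_def ip_def nrm2_def by (simp add: mult.commute)
qed

lemma nrm2_nonneg: "0 \<le> nrm2 x" unfolding nrm2_def by (simp add: sum_nonneg)

lemma comp_le: "(cmod (x$j))^2 \<le> nrm2 x"
  unfolding nrm2_def by (rule member_le_sum) auto

lemma nrm2_pos: "x \<noteq> 0 \<Longrightarrow> 0 < nrm2 x"
proof -
  assume "x \<noteq> 0"
  then obtain j where "x$j \<noteq> 0" by (metis vec_eq_iff zero_index)
  then have "0 < (cmod (x$j))^2" by simp
  then show ?thesis using comp_le[of x j] by linarith
qed

lemma qf_expand: "qf A x = (\<Sum>j\<in>UNIV. \<Sum>l\<in>UNIV. cnj (x$j) * A$j$l * x$l)"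
  unfolding qf_def ip_def matrix_vector_mult_def by (simp add: sum_distrib_left mult_ac)

definition L1n :: "complex^'n^'n \<Rightarrow> real" where
  "L1n A = (\<Sum>j\<in>UNIV. \<Sum>l\<in>UNIV. cmod (A$j$l))"

lemma prod_le: "cmod (x$j) * cmod (x$l) \<le> nrm2 x"
proof -
  have "cmod (x$j) * cmod (x$l) \<le> max ((cmod (x$j))^2) ((cmod (x$l))^2)"
    by (smt (verit) mult_mono norm_ge_zero power2_eq_square)
  then show ?thesis using comp_le[of x j] comp_le[of x l] by linarith
qed

lemma qf_bound: "cmod (qf A x) \<le> L1n A * nrm2 x"
proof -
  have "cmod (qf A x) \<le> (\<Sum>j\<in>UNIV. \<Sum>l\<in>UNIV. cmod (cnj (x$j) * A$j$l * x$l))"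
    unfolding qf_expand by (rule order_trans[OF norm_sum sum_mono[OF norm_sum]])
  also have "\<dots> \<le> (\<Sum>j\<in>UNIV. \<Sum>l\<in>UNIV. cmod (A$j$l) * nrm2 x)"
  proof (intro sum_mono)
    fix j l
    have "cmod (cnj (x$j) * A$j$l * x$l) = cmod (A$j$l) * (cmod (x$j) * cmod (x$l))"
      by (simp add: norm_mult)
    also have "\<dots> \<le> cmod (A$j$l) * nrm2 x" by (intro mult_left_mono prod_le) auto
    finally show "cmod (cnj (x$j) * A$j$l * x$l) \<le> cmod (A$j$l) * nrm2 x" .
  qed
  also have "\<dots> = L1n A * nrm2 x" unfolding L1n_def by (simp add: sum_distrib_right)
  finally show ?thesis .
qed


definition wr :: "complex^'n^'n \<Rightarrow> real" where
  "wr A = Sup ((\<lambda>x. cmod (qf A x) / nrm2 x) ` {x. x \<noteq> 0})"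

lemma ne: "{x::complex^'n. x \<noteq> 0} \<noteq> {}"
proof -
  have "(vec 1 :: complex^'n) \<noteq> 0" by (simp add: vec_eq_iff)
  then show ?thesis by blast
qed

lemma bdd: "bdd_above ((\<lambda>x. cmod (qf A x) / nrm2 x) ` {x. x \<noteq> 0})"
proof (rule bdd_aboveI2)
  fix x :: "complex^'a" assume "x \<in> {x. x \<noteq> 0}"
  then have p: "0 < nrm2 x" using nrm2_pos by auto
  show "cmod (qf A x) / nrm2 x \<le> L1n A" using qf_bound[of A x] p by (simp add: divide_le_eq)
qed

lemma wr_bound: "cmod (qf A x) \<le> wr A * nrm2 x"
proof (cases "x = 0")
  case True then show ?thesis by (simp add: qf_def ip_def nrm2_def)
next
  case False
  then have p: "0 < nrm2 x" using nrm2_pos by auto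
  have "cmod (qf A x) / nrm2 x \<le> wr A" unfolding wr_def
    by (rule cSUP_upper[OF _ bdd]) (use False in auto)
  then show ?thesis using p by (simp add: divide_le_eq)
qed

lemma wr_le: "(\<And>x. cmod (qf A x) \<le> t * nrm2 x) \<Longrightarrow> wr A \<le> t"
  unfolding wr_def
proof (rule cSUP_least[OF ne])
  fix x :: "complex^'a" assume "\<And>x. cmod (qf A x) \<le> t * nrm2 x" "x \<in> {x. x \<noteq> 0}"
  then show "cmod (qf A x) / nrm2 x \<le> t" using nrm2_pos[of x] by (simp add: divide_le_eq)
qed

lemma wr_nonneg: "0 \<le> wr A"
proof -
  obtain x :: "complex^'a" where "x \<noteq> 0" using ne by auto
  then have "0 < nrm2 x" using nrm2_pos by auto
  moreover have "0 \<le> wr A * nrm2 x" using wr_bound[of A x] norm_ge_zero order_trans by blast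
  ultimately show ?thesis by (simp add: zero_le_mult_iff)
qed

lemma wr_le_L1n: "wr A \<le> L1n A" by (rule wr_le) (rule qf_bound)

definition sfm :: "complex^'n^'n \<Rightarrow> complex^'n \<Rightarrow> complex^'n \<Rightarrow> complex" where
  "sfm A y x = (\<Sum>j\<in>UNIV. \<Sum>l\<in>UNIV. cnj (y$j) * A$j$l * x$l)"

lemma qf_lin: "qf A (\<chi> k. u$k + c * v$k) = qf A u + c * sfm A u v + cnj c * sfm A v u + cnj c * c * qf A v"
  unfolding qf_expand sfm_def
  by (simp add: algebra_simps sum.distrib sum_distrib_left)

lemma sfm_basis: "sfm A (axis i 1) (axis j 1) = A$i$j"
proof -
  have "(\<Sum>l\<in>UNIV. (if k = i then A $ i $ l * (if l = j then 1 else 0) else 0)) = (if k = i then A$i$j else 0)" for k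
    by (cases "k = i") (simp_all add: if_distrib[of "\<lambda>t. _ * t"] cong: if_cong)
  then show ?thesis
    unfolding sfm_def axis_def by (simp add: if_distrib[of "\<lambda>t. t * _"] if_distrib[of "cnj"] cong: if_cong)
qed

lemma qf_zero: assumes "\<And>x. qf A x = 0" shows "A = 0"
proof -
  have "A$i$j = 0" for i j
  proof -
    have h: "c * sfm A (axis i 1) (axis j 1) + cnj c * sfm A (axis j 1) (axis i 1) = 0" for c
      using qf_lin[of A "axis i 1" c "axis j 1"] assms by simp
    from h[of 1] h[of \<i>] show ?thesis unfolding sfm_basis
      by (simp add: algebra_simps)
  qed
  then show ?thesis by (simp add: vec_eq_iff)
qed


lemma qf_scale: "qf (\<chi> i j. c * A$i$j) x = c * qf A x"
  unfolding qf_expand by (simp add: sum_distrib_left mult_ac)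

lemma qf_plus: "qf (A + B) x = qf A x + qf B x"
  unfolding qf_def by (simp add: matrix_vector_mult_add_rdistrib ip_add)

lemma qf_0: "qf 0 x = 0"
  unfolding qf_expand by simp

lemma wr_zero_iff: "wr A = 0 \<longleftrightarrow> A = 0"
proof
  assume "wr A = 0"
  then have "cmod (qf A x) \<le> 0" for x using wr_bound[of A x] by simp
  then show "A = 0" by (intro qf_zero) simp
next
  assume "A = 0"
  then have "wr A \<le> 0" by (intro wr_le) (simp add: qf_0)
  then show "wr A = 0" using wr_nonneg[of A] by simp
qed

lemma wr_scale_le: "wr (\<chi> i j. c * A$i$j) \<le> cmod c * wr A"
proof (rule wr_le)
  fix x
  have "cmod (qf (\<chi> i j. c * A$i$j) x) = cmod c * cmod (qf A x)" by (simp add: qf_scale norm_mult)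
  also have "\<dots> \<le> cmod c * (wr A * nrm2 x)" by (intro mult_left_mono wr_bound) auto
  finally show "cmod (qf (\<chi> i j. c * A$i$j) x) \<le> cmod c * wr A * nrm2 x" by (simp add: mult_ac)
qed

lemma wr_scale: "wr (\<chi> i j. c * A$i$j) = cmod c * wr A"
proof (cases "c = 0")
  case True
  then have "(\<chi> i j. c * A$i$j) = 0" by (simp add: vec_eq_iff)
  then show ?thesis using True wr_zero_iff[of 0] by simp
next
  case False
  have e: "A = (\<chi> i j. inverse c * (\<chi> i j. c * A$i$j)$i$j)" using False by (simp add: vec_eq_iff)
  have "wr A \<le> cmod (inverse c) * wr (\<chi> i j. c * A$i$j)" by (subst e) (rule wr_scale_le)
  then have "cmod c * wr A \<le> cmod c * (inverse (cmod c) * wr (\<chi> i j. c * A$i$j))"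
    by (intro mult_left_mono) (auto simp: norm_inverse)
  also have "\<dots> = wr (\<chi> i j. c * A$i$j)" using False by (simp add: mult.assoc[symmetric])
  finally have "cmod c * wr A \<le> wr (\<chi> i j. c * A$i$j)" .
  then show ?thesis using wr_scale_le[of c A] by simp
qed

lemma wr_triangle: "wr (A + B) \<le> wr A + wr B"
proof (rule wr_le)
  fix x
  have "cmod (qf (A + B) x) \<le> cmod (qf A x) + cmod (qf B x)" by (simp add: qf_plus norm_triangle_ineq)
  also have "\<dots> \<le> wr A * nrm2 x + wr B * nrm2 x" by (intro add_mono wr_bound)
  finally show "cmod (qf (A + B) x) \<le> (wr A + wr B) * nrm2 x" by (simp add: algebra_simps)
qed

lemma wr_M:
  fixes X C :: "nat \<Rightarrow> complex^'n^'n"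
  assumes k: "0 < k" and CC: "(\<Sum>i<k. adjoint_mat (C i) ** C i) = mat 1"
  shows "wr (\<Sum>i<k. adjoint_mat (C i) ** X i ** C i) \<le> Max ((\<lambda>i. wr (X i)) ` {..<k})"
proof (rule wr_le)
  fix x
  let ?M = "Max ((\<lambda>i. wr (X i)) ` {..<k})"
  have sn: "(\<Sum>i<k. nrm2 (C i *v x)) = nrm2 x"
  proof -
    have q: "qf (adjoint_mat (C i) ** C i) x = of_real (nrm2 (C i *v x))" for i
      using qf_adj[of "C i" "mat 1" x] qf_id[of "C i *v x"] by simp
    have "of_real (\<Sum>i<k. nrm2 (C i *v x)) = (\<Sum>i<k. qf (adjoint_mat (C i) ** C i) x)"
      by (simp add: q)
    also have "\<dots> = of_real (nrm2 x)" using CC by (simp add: qf_sum[symmetric] qf_id)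
    finally show ?thesis by (simp only: of_real_eq_iff)
  qed
  have "cmod (qf (\<Sum>i<k. adjoint_mat (C i) ** X i ** C i) x) = cmod (\<Sum>i<k. qf (X i) (C i *v x))"
    by (simp add: qf_sum qf_adj)
  also have "\<dots> \<le> (\<Sum>i<k. cmod (qf (X i) (C i *v x)))" by (rule norm_sum)
  also have "\<dots> \<le> (\<Sum>i<k. ?M * nrm2 (C i *v x))"
  proof (intro sum_mono)
    fix i assume "i \<in> {..<k}"
    then have "wr (X i) \<le> ?M" by (intro Max_ge) auto
    then have "wr (X i) * nrm2 (C i *v x) \<le> ?M * nrm2 (C i *v x)"
      by (intro mult_right_mono nrm2_nonneg)
    then show "cmod (qf (X i) (C i *v x)) \<le> ?M * nrm2 (C i *v x)"
      using wr_bound[of "X i" "C i *v x"] by linarith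
  qed
  also have "\<dots> = ?M * nrm2 x" by (simp add: sum_distrib_left[symmetric] sn)
  finally show "cmod (qf (\<Sum>i<k. adjoint_mat (C i) ** X i ** C i) x) \<le> ?M * nrm2 x" .
qed

lemma wr_scaled_M:
  assumes "0 < (c::real)"
  shows "is_M_norm (\<lambda>A::complex^'n^'n. c * wr A)"
  unfolding is_M_norm_def is_matrix_norm_def
proof (intro conjI allI impI)
  fix A :: "complex^'n^'n" show "0 \<le> c * wr A" using assms wr_nonneg[of A] by (intro mult_nonneg_nonneg) auto
next
  fix A :: "complex^'n^'n" show "(c * wr A = 0) = (A = 0)" using assms wr_zero_iff by simp
next
  fix d and A :: "complex^'n^'n" show "c * wr (\<chi> i j. d * A$i$j) = cmod d * (c * wr A)"
    by (simp add: wr_scale)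
next
  fix A B :: "complex^'n^'n" show "c * wr (A + B) \<le> c * wr A + c * wr B"
    using wr_triangle[of A B] assms by (simp add: distrib_left[symmetric])
next
  fix k :: nat and X C :: "nat \<Rightarrow> complex^'n^'n"
  assume k: "0 < k" and CC: "(\<Sum>i<k. adjoint_mat (C i) ** C i) = mat 1"
  obtain i0 where i0: "i0 < k" "Max ((\<lambda>i. wr (X i)) ` {..<k}) = wr (X i0)"
  proof -
    have "Max ((\<lambda>i. wr (X i)) ` {..<k}) \<in> (\<lambda>i. wr (X i)) ` {..<k}" using k by (intro Max_in) auto
    then show ?thesis using that by auto
  qed
  have "c * wr (\<Sum>i<k. adjoint_mat (C i) ** X i ** C i) \<le> c * wr (X i0)"
    using wr_M[OF k CC, of X] i0 assms by simp
  also have "\<dots> \<le> Max ((\<lambda>i. c * wr (X i)) ` {..<k})" using i0 by (intro Max_ge) auto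
  finally show "c * wr (\<Sum>i<k. adjoint_mat (C i) ** X i ** C i) \<le> Max ((\<lambda>i. c * wr (X i)) ` {..<k})" .
qed


lemma N_scaleR:
  assumes N: "is_matrix_norm N"
  shows "N (r *\<^sub>R A) = \<bar>r\<bar> * N A"
proof -
  have "(r *\<^sub>R A)$i$j = of_real r * A$i$j" for i j using scaleR_conv_of_real[of r "A$i$j"] by simp
  then have "r *\<^sub>R A = (\<chi> i j. of_real r * A$i$j)" by (simp add: vec_eq_iff)
  then show ?thesis using N unfolding is_matrix_norm_def by simp
qed

lemma N_cont:
  assumes N: "is_matrix_norm N"
  shows "continuous_on UNIV N"
proof (rule convex_on_continuous)
  show "convex_on UNIV N"
  proof (rule convex_onI)
    fix t :: real and x y assume t: "0 < t" "t < 1"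
    have "N ((1 - t) *\<^sub>R x + t *\<^sub>R y) \<le> N ((1 - t) *\<^sub>R x) + N (t *\<^sub>R y)"
      using N unfolding is_matrix_norm_def by blast
    also have "\<dots> = (1 - t) * N x + t * N y" using t by (simp add: N_scaleR[OF N])
    finally show "N ((1 - t) *\<^sub>R x + t *\<^sub>R y) \<le> (1 - t) * N x + t * N y" .
  qed simp
qed simp

lemma N_lower:
  fixes N :: "complex^'n^'n \<Rightarrow> real"
  assumes N: "is_matrix_norm N"
  shows "\<exists>m>0. \<forall>A. m * norm A \<le> N A"
proof -
  have ne: "sphere (0::complex^'n^'n) 1 \<noteq> {}" by simp
  obtain A0 where A0: "A0 \<in> sphere 0 1" "\<And>B. B \<in> sphere 0 1 \<Longrightarrow> N A0 \<le> N B"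
    using continuous_attains_inf[OF compact_sphere ne continuous_on_subset[OF N_cont[OF N]]] by auto
  have "A0 \<noteq> 0" using A0(1) by auto
  then have m: "0 < N A0" using N unfolding is_matrix_norm_def by (metis order_le_less)
  have "N A0 * norm A \<le> N A" for A
  proof (cases "A = 0")
    case True then show ?thesis using N unfolding is_matrix_norm_def by simp
  next
    case False
    let ?B = "inverse (norm A) *\<^sub>R A"
    have "?B \<in> sphere 0 1" using False by simp
    then have "N A0 \<le> N ?B" by (rule A0(2))
    also have "\<dots> = inverse (norm A) * N A" by (simp add: N_scaleR[OF N])
    finally show ?thesis using False by (simp add: field_simps)
  qed
  then show ?thesis using m by (metis mult.commute)
qed

lemma L1n_le: "L1n (A::complex^'n^'n) \<le> real (CARD('n)) * real (CARD('n)) * norm A"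
proof -
  have h: "cmod (A$j$l) \<le> norm A" for j l
  proof -
    have "norm ((A$j)$l) \<le> norm (A$j)" by (rule Finite_Cartesian_Product.norm_nth_le)
    moreover have "norm (A$j) \<le> norm A" by (rule Finite_Cartesian_Product.norm_nth_le)
    ultimately show ?thesis by simp
  qed
  have "L1n A \<le> (\<Sum>j\<in>(UNIV::'n set). \<Sum>l\<in>(UNIV::'n set). norm A)"
    unfolding L1n_def by (intro sum_mono h)
  then show ?thesis by simp
qed

lemma exists_M_below:
  fixes N :: "complex^'n^'n \<Rightarrow> real"
  assumes N: "is_matrix_norm N"
  shows "\<exists>c>0. is_M_norm (\<lambda>A::complex^'n^'n. c * wr A) \<and> (\<forall>A. c * wr A \<le> N A)"
proof -
  obtain m where m: "0 < m" "\<And>A. m * norm A \<le> N A" using N_lower[OF N] by blast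
  define K where "K = real (CARD('n)) * real (CARD('n))"
  have K: "0 < K" unfolding K_def by simp
  define c where "c = m / K"
  have c: "0 < c" using m K by (simp add: c_def)
  have "c * wr A \<le> N A" for A
  proof -
    have "wr A \<le> K * norm A" using wr_le_L1n[of A] L1n_le[of A] unfolding K_def by linarith
    then have "c * wr A \<le> c * (K * norm A)" using c by (intro mult_left_mono) auto
    also have "\<dots> = m * norm A" using K by (simp add: c_def)
    finally show ?thesis using m(2)[of A] by linarith
  qed
  then show ?thesis using c wr_scaled_M[OF c] by blast
qed

theorem corollary3p2:
  fixes N :: "complex^'n^'n \<Rightarrow> real"
  assumes "is_matrix_norm N"
  shows "\<exists>M0. is_M_norm M0 \<and> (\<forall>A. M0 A \<le> N A) \<and>
           (\<forall>M. is_M_norm M \<and> (\<forall>A. M A \<le> N A) \<longrightarrow> (\<forall>A. M A \<le> M0 A))"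
proof -
  define S where "S = {M. is_M_norm M \<and> (\<forall>A. M A \<le> N A)}"
  obtain c where c: "0 < c" "is_M_norm (\<lambda>A::complex^'n^'n. c * wr A)" "\<forall>A. c * wr A \<le> N A"
    using exists_M_below[OF assms] by blast
  define M1 where "M1 = (\<lambda>A::complex^'n^'n. c * wr A)"
  have M1S: "M1 \<in> S" using c unfolding S_def M1_def by auto
  have Sne: "S \<noteq> {}" using M1S by auto
  define M0 where "M0 A = Sup ((\<lambda>M. M A) ` S)" for A
  have bdd: "bdd_above ((\<lambda>M. M A) ` S)" for A
    by (rule bdd_aboveI2[of _ _ "N A"]) (auto simp: S_def)
  have up: "M \<in> S \<Longrightarrow> M A \<le> M0 A" for M A unfolding M0_def by (rule cSUP_upper[OF _ bdd])
  have le: "(\<And>M. M \<in> S \<Longrightarrow> M A \<le> t) \<Longrightarrow> M0 A \<le> t" for A t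
    unfolding M0_def by (rule cSUP_least[OF Sne]) auto
  have MS1: "is_matrix_norm M" if "M \<in> S" for M
    using that unfolding S_def is_M_norm_def by simp
  have MS2: "M (\<Sum>i<k. adjoint_mat (C i) ** X i ** C i) \<le> Max ((\<lambda>i. M (X i)) ` {..<k})"
    if "M \<in> S" "0 < k" "(\<Sum>i<k. adjoint_mat (C i) ** C i) = mat 1" for M and k :: nat and X C :: "nat \<Rightarrow> complex^'n^'n"
  proof -
    from that(1) have "is_M_norm M" by (simp add: S_def)
    then show ?thesis unfolding is_M_norm_def using that(2,3) by meson
  qed
  have MSn: "0 \<le> M A" "M A = 0 \<longleftrightarrow> A = 0" "M (\<chi> i j. d * A $ i $ j) = cmod d * M A"
    "M (A + B) \<le> M A + M B" if "M \<in> S" for M A B d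
    using MS1[OF that] unfolding is_matrix_norm_def by auto
  have M1n: "is_matrix_norm M1" using MS1[OF M1S] .
  have nonneg: "0 \<le> M0 A" for A using up[OF M1S, of A] MSn(1)[OF M1S, of A] by linarith
  have zero: "M0 A = 0 \<longleftrightarrow> A = 0" for A
  proof
    assume "M0 A = 0"
    then have "M1 A \<le> 0" using up[OF M1S, of A] by simp
    then show "A = 0" using MSn(1,2)[OF M1S, of A] by linarith
  next
    assume "A = 0"
    have "M0 A \<le> 0"
    proof (rule le)
      fix M assume "M \<in> S"
      then show "M A \<le> 0" using MSn(2)[OF \<open>M \<in> S\<close>, of A] \<open>A = 0\<close> by simp
    qed
    then show "M0 A = 0" using nonneg[of A] by linarith
  qed
  have scale_le: "M0 (\<chi> i j. d * A $ i $ j) \<le> cmod d * M0 A" for d A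
  proof (rule le)
    fix M assume "M \<in> S"
    then show "M (\<chi> i j. d * A $ i $ j) \<le> cmod d * M0 A"
      using MSn(3)[of M d A] up[of M A] by (simp add: mult_left_mono)
  qed
  have scale: "M0 (\<chi> i j. d * A $ i $ j) = cmod d * M0 A" for d A
  proof (cases "d = 0")
    case True
    then have "(\<chi> i j. d * A$i$j) = 0" by (simp add: vec_eq_iff)
    then show ?thesis using True zero by simp
  next
    case False
    have e: "A = (\<chi> i j. inverse d * (\<chi> i j. d * A$i$j)$i$j)" using False by (simp add: vec_eq_iff)
    have "M0 A \<le> cmod (inverse d) * M0 (\<chi> i j. d * A$i$j)" by (subst e) (rule scale_le)
    then have "cmod d * M0 A \<le> cmod d * (inverse (cmod d) * M0 (\<chi> i j. d * A$i$j))"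
      by (intro mult_left_mono) (auto simp: norm_inverse)
    also have "\<dots> = M0 (\<chi> i j. d * A$i$j)" using False by (simp add: mult.assoc[symmetric])
    finally have "cmod d * M0 A \<le> M0 (\<chi> i j. d * A$i$j)" .
    then show ?thesis using scale_le[of d A] by simp
  qed
  have tri: "M0 (A + B) \<le> M0 A + M0 B" for A B
  proof (rule le)
    fix M assume "M \<in> S"
    then show "M (A + B) \<le> M0 A + M0 B" using MSn(4)[of M A B] up[of M A] up[of M B] by linarith
  qed
  have Mi: "M0 (\<Sum>i<k. adjoint_mat (C i) ** X i ** C i) \<le> Max ((\<lambda>i. M0 (X i)) ` {..<k})"
    if k: "0 < k" and CC: "(\<Sum>i<k. adjoint_mat (C i) ** C i) = mat 1" for k :: nat and X C :: "nat \<Rightarrow> complex^'n^'n"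
  proof (rule le)
    fix M assume MS': "M \<in> S"
    have "M (\<Sum>i<k. adjoint_mat (C i) ** X i ** C i) \<le> Max ((\<lambda>i. M (X i)) ` {..<k})"
      by (rule MS2[OF MS' k CC])
    also have "\<dots> \<le> Max ((\<lambda>i. M0 (X i)) ` {..<k})"
    proof (rule Max.boundedI)
      show "finite ((\<lambda>i. M (X i)) ` {..<k})" by simp
      show "(\<lambda>i. M (X i)) ` {..<k} \<noteq> {}" using k by auto
      fix a assume "a \<in> (\<lambda>i. M (X i)) ` {..<k}"
      then obtain i where i: "i < k" "a = M (X i)" by auto
      have "M (X i) \<le> M0 (X i)" by (rule up[OF MS'])
      also have "\<dots> \<le> Max ((\<lambda>i. M0 (X i)) ` {..<k})" using i by (intro Max_ge) auto
      finally show "a \<le> Max ((\<lambda>i. M0 (X i)) ` {..<k})" using i by simp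
    qed
    finally show "M (\<Sum>i<k. adjoint_mat (C i) ** X i ** C i) \<le> Max ((\<lambda>i. M0 (X i)) ` {..<k})" .
  qed
  have "is_M_norm M0"
    unfolding is_M_norm_def is_matrix_norm_def
  proof (intro conjI allI impI)
    fix A show "0 \<le> M0 A" by (rule nonneg)
  next
    fix A show "(M0 A = 0) = (A = 0)" by (rule zero)
  next
    fix d A show "M0 (\<chi> i j. d * A $ i $ j) = cmod d * M0 A" by (rule scale)
  next
    fix A B show "M0 (A + B) \<le> M0 A + M0 B" by (rule tri)
  next
    fix k :: nat and X C :: "nat \<Rightarrow> complex^'n^'n"
    assume "0 < k" "(\<Sum>i<k. adjoint_mat (C i) ** C i) = mat 1"
    then show "M0 (\<Sum>i<k. adjoint_mat (C i) ** X i ** C i) \<le> Max ((\<lambda>i. M0 (X i)) ` {..<k})"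
      by (rule Mi)
  qed
  moreover have "\<forall>A. M0 A \<le> N A" by (intro allI le) (auto simp: S_def)
  moreover have "\<forall>M. is_M_norm M \<and> (\<forall>A. M A \<le> N A) \<longrightarrow> (\<forall>A. M A \<le> M0 A)"
    using up unfolding S_def by blast
  ultimately show ?thesis by blast
qed

end
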